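(* Let $G$ be a connected simple graph with $n$ vertices and $n+1$ edges in which two cycles $C_p$ and $C_q$ of lengths $p$ and $q$ share exactly one common vertex (i.e. $G\in\mathcal{B}(p,q)$). If $\max\{p,q\}\ge 4$, then $\operatorname{avm}(G)>\operatorname{avm}(R_n(3,3))$.
   Context: $\operatorname{avm}(G)$ is the average of $|M|$ over all maximal matchings $M$ of $G$ (a matching is maximal if not properly contained in another matching). For $n\ge 6$, $R_n(3,3)$ is the graph obtained from two triangles $uv_1v_2$ and $uw_1w_2$ sharing exactly the vertex $u$ by attaching $n-5$ pendant edges (new leaves) to $v_1$. (Note that $\max\{p,q\}\ge4$ forces $n\ge p+q-1\ge 6$.) *)

theory Defs
  imports Complex_Main
begin

definition simple_graph :: "'a set \<Rightarrow> 'a set set \<Rightarrow> bool" where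
  "simple_graph V E \<longleftrightarrow> finite V \<and>
     (\<forall>e\<in>E. \<exists>x y. e = {x, y} \<and> x \<noteq> y \<and> x \<in> V \<and> y \<in> V)"

definition adj :: "'a set set \<Rightarrow> 'a \<Rightarrow> 'a \<Rightarrow> bool" where
  "adj E x y \<longleftrightarrow> {x, y} \<in> E"

definition connected_graph :: "'a set \<Rightarrow> 'a set set \<Rightarrow> bool" where
  "connected_graph V E \<longleftrightarrow> V \<noteq> {} \<and> (\<forall>x\<in>V. \<forall>y\<in>V. (adj E)\<^sup>*\<^sup>* x y)"

definition is_cycle :: "'a set set \<Rightarrow> 'a list \<Rightarrow> bool" where
  "is_cycle E c \<longleftrightarrow> length c \<ge> 3 \<and> distinct c \<and>
     (\<forall>i < length c. adj E (c ! i) (c ! ((i + 1) mod length c)))"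

definition in_B :: "'a set \<Rightarrow> 'a set set \<Rightarrow> nat \<Rightarrow> nat \<Rightarrow> bool" where
  "in_B V E p q \<longleftrightarrow> simple_graph V E \<and> connected_graph V E \<and> card E = card V + 1 \<and>
     (\<exists>c1 c2. is_cycle E c1 \<and> is_cycle E c2 \<and> length c1 = p \<and> length c2 = q \<and>
        card (set c1 \<inter> set c2) = 1)"

definition matching :: "'a set set \<Rightarrow> 'a set set \<Rightarrow> bool" where
  "matching E M \<longleftrightarrow> M \<subseteq> E \<and> (\<forall>e1\<in>M. \<forall>e2\<in>M. e1 \<noteq> e2 \<longrightarrow> e1 \<inter> e2 = {})"

definition maximal_matching :: "'a set set \<Rightarrow> 'a set set \<Rightarrow> bool" where
  "maximal_matching E M \<longleftrightarrow> matching E M \<and> (\<forall>M'. matching E M' \<and> M \<subseteq> M' \<longrightarrow> M' = M)"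

definition avm :: "'a set set \<Rightarrow> real" where
  "avm E = (\<Sum>M\<in>{M. maximal_matching E M}. real (card M)) / real (card {M. maximal_matching E M})"

text \<open>R_n(3,3): vertices 0..n-1, u = 0, triangles 0,1,2 and 0,3,4, and pendant
  edges from v1 = 1 to the leaves 5,...,n-1.\<close>

definition R33_V :: "nat \<Rightarrow> nat set" where
  "R33_V n = {0..<n}"

definition R33_E :: "nat \<Rightarrow> nat set set" where
  "R33_E n = {{0,1},{0,2},{1,2},{0,3},{0,4},{3,4}} \<union> {{1,k} | k. 5 \<le> k \<and> k < n}"

end

theory Submission
  imports Defs
begin

lemma maximal_cover:
  assumes "maximal_matching E M" "f \<in> E" "f \<noteq> {}"
  shows "f \<inter> \<Union>M \<noteq> {}"
proof
  assume h: "f \<inter> \<Union>M = {}"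
  have m: "matching E M" using assms(1) unfolding maximal_matching_def by blast
  have "matching E (insert f M)"
    using m h assms(2) unfolding matching_def by blast
  then have "insert f M = M" using assms(1) unfolding maximal_matching_def by blast
  then have "f \<in> M" by blast
  then show False using h assms(3) by blast
qed

lemma cover_maximal:
  assumes "matching E M" "\<forall>f\<in>E. f \<inter> \<Union>M \<noteq> {}"
  shows "maximal_matching E M"
  unfolding maximal_matching_def
proof (intro conjI allI impI)
  show "matching E M" by fact
  fix M' assume h: "matching E M' \<and> M \<subseteq> M'"
  show "M' = M"
  proof (rule ccontr)
    assume "M' \<noteq> M"
    then obtain f where f: "f \<in> M'" "f \<notin> M" using h by blast
    then have "f \<in> E" using h unfolding matching_def by blast
    then obtain g where g: "g \<in> M" "f \<inter> g \<noteq> {}" using assms(2) by blast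
    have "g \<in> M'" using g h by blast
    have "f \<noteq> g" using f g by blast
    then have "f \<inter> g = {}" using h f \<open>g \<in> M'\<close> unfolding matching_def by blast
    then show False using g by blast
  qed
qed

lemma finite_MM:
  assumes "finite E"
  shows "finite {M. maximal_matching E M}"
proof -
  have "{M. maximal_matching E M} \<subseteq> Pow E"
    unfolding maximal_matching_def matching_def by blast
  then show ?thesis using assms by (meson finite_Pow_iff finite_subset)
qed

lemma exists_MM:
  assumes "finite E"
  shows "\<exists>M. maximal_matching E M"
proof -
  let ?A = "{M. matching E M}"
  have fin: "finite ?A"
  proof -
    have "?A \<subseteq> Pow E" unfolding matching_def by blast
    then show ?thesis using assms by (meson finite_Pow_iff finite_subset)
  qed
  have ne: "?A \<noteq> {}" unfolding matching_def by auto
  obtain M where M: "M \<in> ?A" "\<forall>b\<in>?A. M \<le> b \<longrightarrow> M = b"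
    using finite_has_maximal[OF fin ne] by blast
  then have "maximal_matching E M" unfolding maximal_matching_def by blast
  then show ?thesis by blast
qed

lemma sg_edge: "simple_graph V E \<Longrightarrow> {x,y} \<in> E \<Longrightarrow> x \<in> V \<and> y \<in> V \<and> x \<noteq> y"
proof -
  assume s: "simple_graph V E" and e: "{x,y} \<in> E"
  then obtain a b where ab: "{x,y} = {a,b}" "a \<noteq> b" "a \<in> V" "b \<in> V"
    unfolding simple_graph_def by blast
  then show ?thesis by (auto simp: doubleton_eq_iff)
qed

lemma sg_edgeE: "simple_graph V E \<Longrightarrow> e \<in> E \<Longrightarrow> \<exists>x y. e = {x,y} \<and> x \<noteq> y \<and> x \<in> V \<and> y \<in> V"
  unfolding simple_graph_def by blast

lemma sg_PowV: "simple_graph V E \<Longrightarrow> E \<subseteq> Pow V"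
proof
  fix e assume s: "simple_graph V E" and e: "e \<in> E"
  then obtain x y where "e = {x,y}" "x \<in> V" "y \<in> V" using sg_edgeE by metis
  then show "e \<in> Pow V" by simp
qed

lemma sg_finE: "simple_graph V E \<Longrightarrow> finite E"
proof -
  assume s: "simple_graph V E"
  have "E \<subseteq> Pow V" using sg_PowV[OF s] .
  moreover have "finite V" using s unfolding simple_graph_def by blast
  ultimately show "finite E" using finite_subset by blast
qed

lemma cross_edge:
  assumes "(adj E)\<^sup>*\<^sup>* x y" "x \<in> U" "y \<notin> U"
  shows "\<exists>a b. a \<in> U \<and> b \<notin> U \<and> {a,b} \<in> E"
  using assms
proof (induction rule: rtranclp_induct)
  case base
  then show ?case by blast
next
  case (step y z)
  show ?case
  proof (cases "y \<in> U")
    case True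
    then show ?thesis using step unfolding adj_def by blast
  next
    case False
    then show ?thesis using step by blast
  qed
qed

lemma sparse_aux:
  assumes sg: "simple_graph V E" and cg: "connected_graph V E"
  shows "U \<subseteq> V \<Longrightarrow> U \<noteq> {} \<Longrightarrow> card {f\<in>E. f \<subseteq> U} + card (V - U) \<le> card E"
proof (induction "card (V - U)" arbitrary: U)
  case 0
  have finE: "finite E" using sg_finE[OF sg] .
  have finV: "finite V" using sg unfolding simple_graph_def by blast
  have "V - U = {}"
    using 0 finV by simp
  moreover have "card {f\<in>E. f \<subseteq> U} \<le> card E" using finE by (intro card_mono) auto
  then show ?case using 0 by linarith
next
  case (Suc k)
  have finV: "finite V" using sg unfolding simple_graph_def by blast
  have finE: "finite E" using sg_finE[OF sg] .
  have "card (V - U) \<noteq> 0" using Suc.hyps(2) by linarith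
  then have "V - U \<noteq> {}" by (metis card.empty)
  then obtain y where y: "y \<in> V - U" by blast
  obtain x where x: "x \<in> U" using Suc.prems by blast
  have "(adj E)\<^sup>*\<^sup>* x y" using cg x y Suc.prems unfolding connected_graph_def by blast
  then obtain a b where ab: "a \<in> U" "b \<notin> U" "{a,b} \<in> E" using cross_edge[of E x y U] x y by blast
  have bV: "b \<in> V" using sg_edge[OF sg ab(3)] by blast
  let ?U' = "insert b U"
  have c1: "k = card (V - ?U')"
  proof -
    have "V - ?U' = (V - U) - {b}" by blast
    then show ?thesis using Suc.hyps(2) bV ab(2) finV by simp
  qed
  have IH: "card {f\<in>E. f \<subseteq> ?U'} + card (V - ?U') \<le> card E"
    using Suc.hyps(1)[OF c1] Suc.prems bV by blast
  have sub: "insert {a,b} {f\<in>E. f \<subseteq> U} \<subseteq> {f\<in>E. f \<subseteq> ?U'}" using ab by blast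
  have nin: "{a,b} \<notin> {f\<in>E. f \<subseteq> U}" using ab by blast
  have "card (insert {a,b} {f\<in>E. f \<subseteq> U}) \<le> card {f\<in>E. f \<subseteq> ?U'}"
    using sub finE by (intro card_mono) auto
  then have "card {f\<in>E. f \<subseteq> U} + 1 \<le> card {f\<in>E. f \<subseteq> ?U'}"
    using nin finE by simp
  then show ?case using IH Suc.hyps(2) c1 by linarith
qed

lemma sparse:
  assumes sg: "simple_graph V E" and cg: "connected_graph V E" and ce: "card E = card V + 1"
    and U: "U \<subseteq> V"
  shows "card {f\<in>E. f \<subseteq> U} \<le> card U + 1"
proof (cases "U = {}")
  case True
  have "{f\<in>E. f \<subseteq> U} \<subseteq> {{}}" using True by blast
  then have "card {f\<in>E. f \<subseteq> U} \<le> card {{}::'a set}" by (intro card_mono) auto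
  then have "card {f\<in>E. f \<subseteq> U} \<le> 1" by simp
  then show ?thesis by simp
next
  case False
  have finV: "finite V" using sg unfolding simple_graph_def by blast
  have finU: "finite U" using U finV finite_subset by blast
  have "card (V - U) = card V - card U" using card_Diff_subset[OF finU U] .
  moreover have "card U \<le> card V" using card_mono[OF finV U] .
  ultimately have "card V = card U + card (V - U)" by linarith
  then show ?thesis using sparse_aux[OF sg cg U False] ce by linarith
qed

definition cedges :: "'a list \<Rightarrow> 'a set set" where
  "cedges c = (\<lambda>i. {c!i, c!(Suc i mod length c)}) ` {..<length c}"

lemma suc_mod: "i < p \<Longrightarrow> Suc i mod p = (if Suc i = p then 0 else Suc i)"
  by auto

lemma suc_mod_lt: "i < p \<Longrightarrow> Suc i mod p < p"
proof -
  assume "i < p" then have "0 < p" by simp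
  then show ?thesis by simp
qed

lemma cyc_adj: "is_cycle E c \<Longrightarrow> i < length c \<Longrightarrow> {c!i, c!(Suc i mod length c)} \<in> E"
  unfolding is_cycle_def adj_def by simp

lemma cedges_sub: "is_cycle E c \<Longrightarrow> cedges c \<subseteq> E"
  unfolding cedges_def using cyc_adj by blast

lemma cedges_set: "f \<in> cedges c \<Longrightarrow> f \<subseteq> set c"
proof -
  assume "f \<in> cedges c"
  then obtain i where i: "i < length c" "f = {c!i, c!(Suc i mod length c)}"
    unfolding cedges_def by blast
  have "c!i \<in> set c" using i(1) by simp
  moreover have "c!(Suc i mod length c) \<in> set c" using suc_mod_lt[OF i(1)] by simp
  ultimately show ?thesis using i(2) by simp
qed

lemma cyc_nth_eq: "is_cycle E c \<Longrightarrow> i < length c \<Longrightarrow> j < length c \<Longrightarrow> c!i = c!j \<longleftrightarrow> i = j"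
  unfolding is_cycle_def using nth_eq_iff_index_eq by blast

lemma cedges_two:
  assumes "is_cycle E c" "f \<in> cedges c"
  shows "\<exists>x y. f = {x,y} \<and> x \<noteq> y"
proof -
  obtain i where i: "i < length c" "f = {c!i, c!(Suc i mod length c)}"
    using assms(2) unfolding cedges_def by blast
  have l: "length c \<ge> 3" using assms(1) unfolding is_cycle_def by blast
  have "Suc i mod length c < length c" using i(1) by (simp add: suc_mod_lt)
  moreover have "i \<noteq> Suc i mod length c" using i(1) l by (simp add: suc_mod)
  ultimately have "c!i \<noteq> c!(Suc i mod length c)" using cyc_nth_eq[OF assms(1) i(1)] by blast
  then show ?thesis using i by blast
qed

lemma card_cedges:
  assumes c: "is_cycle E c"
  shows "card (cedges c) = length c"
proof -
  let ?p = "length c"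
  have l: "?p \<ge> 3" using c unfolding is_cycle_def by blast
  have "inj_on (\<lambda>i. {c!i, c!(Suc i mod ?p)}) {..<?p}"
  proof (rule inj_onI)
    fix i j assume i: "i \<in> {..<?p}" and j: "j \<in> {..<?p}"
      and eq: "{c!i, c!(Suc i mod ?p)} = {c!j, c!(Suc j mod ?p)}"
    have i': "i < ?p" and j': "j < ?p" using i j by auto
    have si: "Suc i mod ?p < ?p" and sj: "Suc j mod ?p < ?p" using i' j' by (auto simp: suc_mod_lt)
    from eq have "(c!i = c!j \<and> c!(Suc i mod ?p) = c!(Suc j mod ?p)) \<or>
                  (c!i = c!(Suc j mod ?p) \<and> c!(Suc i mod ?p) = c!j)"
      by (simp add: doubleton_eq_iff)
    then show "i = j"
    proof
      assume "c!i = c!j \<and> c!(Suc i mod ?p) = c!(Suc j mod ?p)"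
      then show ?thesis using cyc_nth_eq[OF c i' j'] by blast
    next
      assume h: "c!i = c!(Suc j mod ?p) \<and> c!(Suc i mod ?p) = c!j"
      then have a: "i = Suc j mod ?p" and b: "Suc i mod ?p = j"
        using cyc_nth_eq[OF c i' sj] cyc_nth_eq[OF c si j'] by auto
      from a b i' j' l show ?thesis by (auto simp: suc_mod split: if_splits)
    qed
  qed
  then show ?thesis unfolding cedges_def by (simp add: card_image)
qed

lemma cedge_at0:
  assumes c: "is_cycle E c" and f: "{c!0, x} \<in> cedges c"
  shows "x = c!1 \<or> x = c!(length c - 1)"
proof -
  let ?p = "length c"
  have l: "?p \<ge> 3" using c unfolding is_cycle_def by blast
  obtain i where i: "i < ?p" "{c!0, x} = {c!i, c!(Suc i mod ?p)}"
    using f unfolding cedges_def by blast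
  have si: "Suc i mod ?p < ?p" using i by (simp add: suc_mod_lt)
  have z: "0 < ?p" using l by linarith
  from i(2) have "(c!0 = c!i \<and> x = c!(Suc i mod ?p)) \<or> (c!0 = c!(Suc i mod ?p) \<and> x = c!i)"
    by (simp add: doubleton_eq_iff)
  then show ?thesis
  proof
    assume h: "c!0 = c!i \<and> x = c!(Suc i mod ?p)"
    then have "i = 0" using cyc_nth_eq[OF c z i(1)] by blast
    then show ?thesis using h l by simp
  next
    assume h: "c!0 = c!(Suc i mod ?p) \<and> x = c!i"
    then have "Suc i mod ?p = 0" using cyc_nth_eq[OF c z si] by auto
    then have "i = ?p - 1" using i(1) by (auto simp: suc_mod split: if_splits)
    then show ?thesis using h by simp
  qed
qed

lemma cedge_1_last:
  assumes c: "is_cycle E c" and l: "length c \<ge> 4"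
  shows "{c!1, c!(length c - 1)} \<notin> cedges c"
proof
  let ?p = "length c"
  assume f: "{c!1, c!(?p - 1)} \<in> cedges c"
  obtain i where i: "i < ?p" "{c!1, c!(?p - 1)} = {c!i, c!(Suc i mod ?p)}"
    using f unfolding cedges_def by blast
  have si: "Suc i mod ?p < ?p" using i by (simp add: suc_mod_lt)
  have o: "1 < ?p" and pl: "?p - 1 < ?p" using l by auto
  from i(2) have "(c!1 = c!i \<and> c!(?p - 1) = c!(Suc i mod ?p)) \<or> (c!1 = c!(Suc i mod ?p) \<and> c!(?p - 1) = c!i)"
    by (simp add: doubleton_eq_iff)
  then show False
  proof
    assume h: "c!1 = c!i \<and> c!(?p - 1) = c!(Suc i mod ?p)"
    then have "i = 1" "?p - 1 = Suc i mod ?p"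
      using cyc_nth_eq[OF c o i(1)] cyc_nth_eq[OF c pl si] by auto
    then show False using l by (auto simp: suc_mod split: if_splits)
  next
    assume h: "c!1 = c!(Suc i mod ?p) \<and> c!(?p - 1) = c!i"
    then have "1 = Suc i mod ?p" "?p - 1 = i"
      using cyc_nth_eq[OF c o si] cyc_nth_eq[OF c pl i(1)] by auto
    then show False using l by (auto simp: suc_mod split: if_splits)
  qed
qed

lemma rotate_cycle:
  assumes c: "is_cycle E c" and u: "u \<in> set c"
  shows "\<exists>c'. is_cycle E c' \<and> c'!0 = u \<and> set c' = set c \<and> length c' = length c"
proof -
  let ?p = "length c"
  obtain k where k: "k < ?p" "c!k = u" using u by (meson in_set_conv_nth)
  let ?c = "rotate k c"
  have len: "length ?c = ?p" by simp
  have nth: "\<And>n. n < ?p \<Longrightarrow> ?c!n = c!((k + n) mod ?p)" by (simp add: nth_rotate)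
  have l: "?p \<ge> 3" using c unfolding is_cycle_def by blast
  have "is_cycle E ?c"
    unfolding is_cycle_def
  proof (intro conjI allI impI)
    show "3 \<le> length ?c" using l by simp
    show "distinct ?c" using c unfolding is_cycle_def by simp
    fix i assume i: "i < length ?c"
    have i': "i < ?p" using i by simp
    have "(i + 1) mod length ?c < ?p" using suc_mod_lt[OF i'] by simp
    then have e2: "?c ! ((i + 1) mod length ?c) = c!((k + (i+1) mod ?p) mod ?p)" using nth by simp
    have e1: "?c ! i = c!((k + i) mod ?p)" using nth i' by simp
    have "(k + (i+1) mod ?p) mod ?p = Suc ((k + i) mod ?p) mod ?p"
      by (metis add_Suc_right mod_Suc_eq mod_add_right_eq Suc_eq_plus1)
    moreover have "(k + i) mod ?p < ?p" using l by (intro mod_less_divisor) linarith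
    ultimately show "adj E (?c ! i) (?c ! ((i + 1) mod length ?c))"
      using cyc_adj[OF c, of "(k + i) mod ?p"] e1 e2 unfolding adj_def by simp
  qed
  moreover have "?c!0 = u" using nth[of 0] k l by (metis (no_types) add.right_neutral gr_zeroI mod_less not_less_zero)
  ultimately show ?thesis by (intro exI[of _ ?c]) simp
qed

lemma cyc_inV:
  assumes sg: "simple_graph V E" and c: "is_cycle E c"
  shows "set c \<subseteq> V"
proof
  fix x assume "x \<in> set c"
  then obtain i where i: "i < length c" "c!i = x" by (meson in_set_conv_nth)
  have "{c!i, c!(Suc i mod length c)} \<in> E" using cyc_adj[OF c i(1)] .
  then show "x \<in> V" using sg_edge[OF sg] i(2) by blast
qed

lemma card_two_sub:
  assumes "x \<noteq> y" "{x,y} \<subseteq> A" "card A = 1"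
  shows False
proof -
  have "finite A" using assms(3) by (metis card.infinite zero_neq_one)
  then have "card {x,y} \<le> card A" using assms(2) by (rule card_mono)
  then show False using assms by simp
qed

lemma nochord:
  assumes sg: "simple_graph V E" and cg: "connected_graph V E" and ce: "card E = card V + 1"
    and c: "is_cycle E c" and d: "is_cycle E d" and i1: "card (set c \<inter> set d) = 1"
    and x: "x \<in> set c \<union> set d" and y: "y \<in> set c \<union> set d" and e: "{x,y} \<in> E"
  shows "{x,y} \<in> cedges c \<union> cedges d"
proof (rule ccontr)
  assume nin: "{x,y} \<notin> cedges c \<union> cedges d"
  let ?K = "set c \<union> set d"
  have KV: "?K \<subseteq> V" using cyc_inV[OF sg c] cyc_inV[OF sg d] by blast
  have dc: "distinct c" and dd: "distinct d" using c d unfolding is_cycle_def by auto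
  have "card (set c) + card (set d) = card ?K + card (set c \<inter> set d)"
    by (rule card_Un_Int) auto
  then have cK: "card ?K + 1 = length c + length d"
    using i1 distinct_card[OF dc] distinct_card[OF dd] by simp
  have disj: "cedges c \<inter> cedges d = {}"
  proof (rule ccontr)
    assume "cedges c \<inter> cedges d \<noteq> {}"
    then obtain f where f: "f \<in> cedges c" "f \<in> cedges d" by blast
    obtain a b where ab: "f = {a,b}" "a \<noteq> b" using cedges_two[OF c f(1)] by blast
    have "{a,b} \<subseteq> set c \<inter> set d" using cedges_set[OF f(1)] cedges_set[OF f(2)] ab by blast
    then show False using card_two_sub[OF ab(2) _ i1] by blast
  qed
  have finc: "finite (cedges c)" and find: "finite (cedges d)" unfolding cedges_def by auto
  have cCE: "card (cedges c \<union> cedges d) = length c + length d"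
    using card_Un_disjoint[OF finc find disj] card_cedges[OF c] card_cedges[OF d] by simp
  have sub: "insert {x,y} (cedges c \<union> cedges d) \<subseteq> {f\<in>E. f \<subseteq> ?K}"
    using cedges_sub[OF c] cedges_sub[OF d] cedges_set x y e by blast
  have finE: "finite E" using sg_finE[OF sg] .
  have "card (insert {x,y} (cedges c \<union> cedges d)) \<le> card {f\<in>E. f \<subseteq> ?K}"
    using sub finE by (intro card_mono) auto
  moreover have "card (insert {x,y} (cedges c \<union> cedges d)) = length c + length d + 1"
    using nin cCE finc find by simp
  moreover have "card {f\<in>E. f \<subseteq> ?K} \<le> card ?K + 1" using sparse[OF sg cg ce KV] .
  ultimately show False using cK by linarith
qed

locale bic =
  fixes V :: "'a set" and E :: "'a set set" and c d :: "'a list" and u :: 'a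
  assumes sg: "simple_graph V E"
    and cc: "is_cycle E c" and cd: "is_cycle E d"
    and p4: "length c \<ge> 4"
    and c0: "c!0 = u" and d0: "d!0 = u"
    and cap: "set c \<inter> set d = {u}"
    and NC: "\<And>x y. x \<in> set c \<union> set d \<Longrightarrow> y \<in> set c \<union> set d \<Longrightarrow> {x,y} \<in> E \<Longrightarrow>
               {x,y} \<in> cedges c \<union> cedges d"
begin

abbreviation "p \<equiv> length c"
abbreviation "q \<equiv> length d"

lemma q3: "q \<ge> 3" using cd unfolding is_cycle_def by blast
lemma cne[simp]: "c \<noteq> []" using p4 by auto
lemma dne[simp]: "d \<noteq> []" using q3 by auto

lemma cdist: "i < p \<Longrightarrow> j < p \<Longrightarrow> c!i = c!j \<longleftrightarrow> i = j" using cyc_nth_eq[OF cc] by blast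
lemma ddist: "i < q \<Longrightarrow> j < q \<Longrightarrow> d!i = d!j \<longleftrightarrow> i = j" using cyc_nth_eq[OF cd] by blast

lemma c_in: "i < p \<Longrightarrow> c!i \<in> set c" by simp
lemma d_in: "i < q \<Longrightarrow> d!i \<in> set d" by simp

lemma c_nu: "0 < i \<Longrightarrow> i < p \<Longrightarrow> c!i \<noteq> u"
  using cdist[of i 0] c0 p4 by auto
lemma d_nu: "0 < i \<Longrightarrow> i < q \<Longrightarrow> d!i \<noteq> u"
  using ddist[of i 0] d0 q3 by auto

lemma c_nd: "0 < i \<Longrightarrow> i < p \<Longrightarrow> c!i \<notin> set d"
  using c_nu cap c_in by blast
lemma d_nc: "0 < i \<Longrightarrow> i < q \<Longrightarrow> d!i \<notin> set c"
  using d_nu cap d_in by blast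

lemma edge_c: "i < p \<Longrightarrow> {c!i, c!(Suc i mod p)} \<in> E" using cyc_adj[OF cc] .
lemma edge_d: "i < q \<Longrightarrow> {d!i, d!(Suc i mod q)} \<in> E" using cyc_adj[OF cd] .

lemma E_uc1: "{u, c!1} \<in> E" using edge_c[of 0] p4 c0 by simp
lemma E_c12: "{c!1, c!2} \<in> E" using edge_c[of 1] p4 by (simp add: numeral_2_eq_2)
lemma E_c23: "{c!2, c!3} \<in> E" using edge_c[of 2] p4 by (simp add: numeral_2_eq_2 numeral_3_eq_3)
lemma E_ucl: "{u, c!(p-1)} \<in> E"
proof -
  have "{c!(p-1), c!(Suc (p-1) mod p)} \<in> E" using edge_c[of "p-1"] p4 by simp
  moreover have "Suc (p-1) mod p = 0" using p4 by simp
  ultimately show ?thesis using c0 by (simp add: insert_commute)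
qed
lemma E_ud1: "{u, d!1} \<in> E" using edge_d[of 0] q3 d0 by simp
lemma E_d12: "{d!1, d!2} \<in> E" using edge_d[of 1] q3 by (simp add: numeral_2_eq_2)
lemma E_d23: "q \<ge> 4 \<Longrightarrow> {d!2, d!3} \<in> E" using edge_d[of 2] by (simp add: numeral_2_eq_2 numeral_3_eq_3)
lemma E_udl: "{u, d!(q-1)} \<in> E"
proof -
  have "{d!(q-1), d!(Suc (q-1) mod q)} \<in> E" using edge_d[of "q-1"] q3 by simp
  moreover have "Suc (q-1) mod q = 0" using q3 by simp
  ultimately show ?thesis using d0 by (simp add: insert_commute)
qed

lemma N1: "x \<in> set c \<Longrightarrow> x \<noteq> u \<Longrightarrow> y \<in> set d \<Longrightarrow> y \<noteq> u \<Longrightarrow> {x,y} \<notin> E"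
proof
  assume x: "x \<in> set c" "x \<noteq> u" and y: "y \<in> set d" "y \<noteq> u" and e: "{x,y} \<in> E"
  have "{x,y} \<in> cedges c \<union> cedges d" using NC[OF _ _ e] x y by blast
  then show False
  proof
    assume "{x,y} \<in> cedges c"
    then have "y \<in> set c" using cedges_set by blast
    then show False using y cap by blast
  next
    assume "{x,y} \<in> cedges d"
    then have "x \<in> set d" using cedges_set by blast
    then show False using x cap by blast
  qed
qed

lemma N2: "{c!1, c!(p-1)} \<notin> E"
proof
  assume e: "{c!1, c!(p-1)} \<in> E"
  have i: "c!1 \<in> set c" "c!(p-1) \<in> set c" using p4 by auto
  have "{c!1, c!(p-1)} \<in> cedges c \<union> cedges d" using NC[OF _ _ e] i by blast
  then show False
  proof
    assume "{c!1, c!(p-1)} \<in> cedges c"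
    then show False using cedge_1_last[OF cc p4] by blast
  next
    assume "{c!1, c!(p-1)} \<in> cedges d"
    then have "c!1 \<in> set d" using cedges_set by blast
    then show False using c_nd[of 1] p4 by simp
  qed
qed

lemma N3: "{u,x} \<in> E \<Longrightarrow> x \<in> set d \<Longrightarrow> x = d!1 \<or> x = d!(q-1)"
proof -
  assume e: "{u,x} \<in> E" and x: "x \<in> set d"
  have xu: "x \<noteq> u" using sg_edge[OF sg e] by blast
  have uK: "u \<in> set c \<union> set d" using cap by blast
  have "{u,x} \<in> cedges c \<union> cedges d" using NC[OF uK _ e] x by blast
  then show ?thesis
  proof
    assume "{u,x} \<in> cedges c"
    then have "x \<in> set c" using cedges_set by blast
    then show ?thesis using x xu cap by blast
  next
    assume "{u,x} \<in> cedges d"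
    then show ?thesis using cedge_at0[OF cd, of x] d0 by simp
  qed
qed

lemma N4: "{u,x} \<in> E \<Longrightarrow> x \<in> set c \<Longrightarrow> x = c!1 \<or> x = c!(p-1)"
proof -
  assume e: "{u,x} \<in> E" and x: "x \<in> set c"
  have xu: "x \<noteq> u" using sg_edge[OF sg e] by blast
  have uK: "u \<in> set c \<union> set d" using cap by blast
  have "{u,x} \<in> cedges c \<union> cedges d" using NC[OF uK _ e] x by blast
  then show ?thesis
  proof
    assume "{u,x} \<in> cedges d"
    then have "x \<in> set d" using cedges_set by blast
    then show ?thesis using x xu cap by blast
  next
    assume "{u,x} \<in> cedges c"
    then show ?thesis using cedge_at0[OF cc, of x] c0 by simp
  qed
qed

end

lemma three_disj:
  assumes "g1 \<inter> {a,b} \<noteq> {}" "g2 \<inter> {a,b} \<noteq> {}" "g3 \<inter> {a,b} \<noteq> {}"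
    "g1 \<inter> g2 = {}" "g1 \<inter> g3 = {}" "g2 \<inter> g3 = {}"
  shows False
  using assms by blast

context bic begin

lemma other_end: "g \<in> E \<Longrightarrow> x \<in> g \<Longrightarrow> \<exists>z. g = {x,z} \<and> z \<noteq> x"
proof -
  assume g: "g \<in> E" and x: "x \<in> g"
  obtain a b where ab: "g = {a,b}" "a \<noteq> b" using sg_edgeE[OF sg g] by blast
  show ?thesis
  proof (cases "x = a")
    case True then show ?thesis using ab by blast
  next
    case False then have "x = b" using x ab by blast
    then show ?thesis using ab by (intro exI[of _ a]) auto
  qed
qed

lemma finE: "finite E" using sg_finE[OF sg] .

lemma mm_ge2:
  assumes M: "maximal_matching E M"
  shows "card M \<ge> 2"
proof (rule ccontr)
  assume "\<not> card M \<ge> 2"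
  then have cM: "card M = 0 \<or> card M = 1" by linarith
  have ME: "M \<subseteq> E" using M unfolding maximal_matching_def matching_def by blast
  have finM: "finite M" using finite_subset[OF ME finE] .
  let ?g1 = "{u, c!1}" and ?g2 = "{c!2, c!3}" and ?g3 = "{d!1, d!2}"
  have hit: "\<And>g. g \<in> E \<Longrightarrow> g \<inter> \<Union>M \<noteq> {}"
  proof -
    fix g assume g: "g \<in> E"
    then have "g \<noteq> {}" using sg_edgeE[OF sg g] by blast
    then show "g \<inter> \<Union>M \<noteq> {}" using maximal_cover[OF M g] by blast
  qed
  have h1: "?g1 \<inter> \<Union>M \<noteq> {}" using hit[OF E_uc1] .
  have h2: "?g2 \<inter> \<Union>M \<noteq> {}" using hit[OF E_c23] .
  have h3: "?g3 \<inter> \<Union>M \<noteq> {}" using hit[OF E_d12] .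
  have u2: "u \<noteq> c!2" "u \<noteq> c!3" using c_nu[of 2] c_nu[of 3] p4 by auto
  have c12: "c!1 \<noteq> c!2" "c!1 \<noteq> c!3" using cdist[of 1 2] cdist[of 1 3] p4 by auto
  have ud: "u \<noteq> d!1" "u \<noteq> d!2" using d_nu[of 1] d_nu[of 2] q3 by auto
  have cnd: "c!1 \<notin> set d" "c!2 \<notin> set d" "c!3 \<notin> set d" using c_nd[of 1] c_nd[of 2] c_nd[of 3] p4 by auto
  have dind: "d!1 \<in> set d" "d!2 \<in> set d" using q3 by auto
  have d12: "?g1 \<inter> ?g2 = {}" using u2 c12 by auto
  have d13: "?g1 \<inter> ?g3 = {}" using ud cnd dind by auto
  have d23: "?g2 \<inter> ?g3 = {}" using cnd dind by auto
  from cM show False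
  proof
    assume "card M = 0"
    then have "M = {}" using finM by simp
    then show False using h1 by simp
  next
    assume "card M = 1"
    then obtain f where f: "M = {f}" using card_1_singletonE by blast
    then have "f \<in> E" using ME by blast
    then obtain a b where ab: "f = {a,b}" using sg_edgeE[OF sg] by blast
    have "\<Union>M = {a,b}" using f ab by simp
    then show False using three_disj[OF _ _ _ d12 d13 d23] h1 h2 h3 by simp
  qed
qed

lemma split2:
  assumes M: "maximal_matching E M" and c2: "card M = 2"
  shows "\<exists>m e. M = {{u,m}, e} \<and> {u,m} \<in> E \<and> e \<in> E \<and> u \<notin> e \<and> m \<notin> e \<and>
           (\<exists>a b. e = {a,b} \<and> a \<noteq> b) \<and> (\<forall>f\<in>E. f \<inter> insert u (insert m e) \<noteq> {})"
proof -
  obtain e1 e2 where e12: "M = {e1,e2}" "e1 \<noteq> e2" using c2 by (meson card_2_iff)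
  have mt: "matching E M" using M unfolding maximal_matching_def by blast
  have E12: "e1 \<in> E" "e2 \<in> E" using mt e12 unfolding matching_def by auto
  have dj: "e1 \<inter> e2 = {}" using mt e12 unfolding matching_def by auto
  have cov: "\<forall>f\<in>E. f \<inter> (e1 \<union> e2) \<noteq> {}"
  proof
    fix f assume f: "f \<in> E"
    then have "f \<noteq> {}" using sg_edgeE[OF sg f] by blast
    then show "f \<inter> (e1 \<union> e2) \<noteq> {}" using maximal_cover[OF M f] e12 by simp
  qed
  have uin: "u \<in> e1 \<union> e2"
  proof (rule ccontr)
    assume nu: "u \<notin> e1 \<union> e2"
    have cv2: "\<And>x. {u,x} \<in> E \<Longrightarrow> x \<in> e1 \<union> e2"
    proof -
      fix x assume "{u,x} \<in> E"
      then have "{u,x} \<inter> (e1 \<union> e2) \<noteq> {}" by (rule bspec[OF cov])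
      then show "x \<in> e1 \<union> e2" using nu by auto
    qed
    have i1: "c!1 \<in> e1 \<union> e2" using cv2[OF E_uc1] .
    have i2: "c!(p-1) \<in> e1 \<union> e2" using cv2[OF E_ucl] .
    have i3: "d!1 \<in> e1 \<union> e2" using cv2[OF E_ud1] .
    have i4: "d!(q-1) \<in> e1 \<union> e2" using cv2[OF E_udl] .
    obtain a1 b1 where ab1: "e1 = {a1,b1}" "a1 \<noteq> b1" using sg_edgeE[OF sg E12(1)] by blast
    obtain a2 b2 where ab2: "e2 = {a2,b2}" "a2 \<noteq> b2" using sg_edgeE[OF sg E12(2)] by blast
    have ce: "card (e1 \<union> e2) = 4" using ab1 ab2 dj by (simp add: card_Un_disjoint)
    have c1l: "c!1 \<noteq> c!(p-1)" using cdist[of 1 "p-1"] p4 by auto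
    have d1l: "d!1 \<noteq> d!(q-1)" using ddist[of 1 "q-1"] q3 by auto
    have cn: "c!1 \<notin> set d" "c!(p-1) \<notin> set d" using c_nd[of 1] c_nd[of "p-1"] p4 by auto
    have dn: "d!1 \<in> set d" "d!(q-1) \<in> set d" using q3 by auto
    have nq: "c!1 \<noteq> d!1" "c!1 \<noteq> d!(q-1)" "c!(p-1) \<noteq> d!1" "c!(p-1) \<noteq> d!(q-1)"
      using cn dn by metis+
    have c4: "card {c!1, c!(p-1), d!1, d!(q-1)} = 4" using c1l d1l nq by simp
    have "{c!1, c!(p-1), d!1, d!(q-1)} = e1 \<union> e2"
      using card_subset_eq[of "e1 \<union> e2" "{c!1, c!(p-1), d!1, d!(q-1)}"] ce c4 i1 i2 i3 i4 ab1 ab2 by auto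
    moreover obtain g where g: "g \<in> {e1,e2}" "c!1 \<in> g" using i1 by blast
    moreover have gE: "g \<in> E" using g E12 by blast
    ultimately obtain z where z: "g = {c!1, z}" "z \<noteq> c!1" "z \<in> {c!(p-1), d!1, d!(q-1)}"
      using other_end[OF gE g(2)] by blast
    have zE: "{c!1, z} \<in> E" using gE z by simp
    have c1: "c!1 \<in> set c" "c!1 \<noteq> u" using c_nu[of 1] p4 by auto
    have dnu: "d!1 \<noteq> u" "d!(q-1) \<noteq> u" using d_nu[of 1] d_nu[of "q-1"] q3 by auto
    from z(3) show False
    proof (elim insertE)
      assume "z = c!(p-1)" then show False using N2 zE by simp
    next
      assume "z = d!1" then show False using N1[OF c1 dn(1) dnu(1)] zE by simp
    next
      assume "z = d!(q-1)" then show False using N1[OF c1 dn(2) dnu(2)] zE by simp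
    qed simp
  qed
  have gen: "\<And>g h. g \<in> E \<Longrightarrow> h \<in> E \<Longrightarrow> g \<inter> h = {} \<Longrightarrow> u \<in> g \<Longrightarrow> M = {g,h} \<Longrightarrow>
          (\<forall>f\<in>E. f \<inter> (g \<union> h) \<noteq> {}) \<Longrightarrow>
          \<exists>m e. M = {{u,m}, e} \<and> {u,m} \<in> E \<and> e \<in> E \<and> u \<notin> e \<and> m \<notin> e \<and>
           (\<exists>a b. e = {a,b} \<and> a \<noteq> b) \<and> (\<forall>f\<in>E. f \<inter> insert u (insert m e) \<noteq> {})"
  proof -
    fix g h assume g: "g \<in> E" and h: "h \<in> E" and gh: "g \<inter> h = {}" and ug: "u \<in> g"
      and Mgh: "M = {g,h}" and cv: "\<forall>f\<in>E. f \<inter> (g \<union> h) \<noteq> {}"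
    obtain m where m: "g = {u,m}" "m \<noteq> u" using other_end[OF g ug] by blast
    obtain a b where ab: "h = {a,b}" "a \<noteq> b" using sg_edgeE[OF sg h] by blast
    have "insert u (insert m h) = g \<union> h" using m by auto
    then show "\<exists>m e. M = {{u,m}, e} \<and> {u,m} \<in> E \<and> e \<in> E \<and> u \<notin> e \<and> m \<notin> e \<and>
           (\<exists>a b. e = {a,b} \<and> a \<noteq> b) \<and> (\<forall>f\<in>E. f \<inter> insert u (insert m e) \<noteq> {})"
      using m ab g h gh Mgh cv by (intro exI[of _ m] exI[of _ h]) auto
  qed
  from uin show ?thesis
  proof
    assume "u \<in> e1" then show ?thesis using gen[OF E12 dj _ e12(1)] cov by blast
  next
    assume "u \<in> e2"
    moreover have "M = {e2,e1}" using e12 by auto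
    moreover have "e2 \<inter> e1 = {}" using dj by auto
    moreover have "\<forall>f\<in>E. f \<inter> (e2 \<union> e1) \<noteq> {}" using cov by (simp add: Un_commute)
    ultimately show ?thesis using gen[OF E12(2) E12(1)] by blast
  qed
qed

end

context bic begin

lemma core2:
  assumes um: "{u,m} \<in> E" and eE: "e \<in> E" and ue: "u \<notin> e" and me: "m \<notin> e"
    and ab: "e = {a,b}" "a \<noteq> b" and cov: "\<forall>f\<in>E. f \<inter> insert u (insert m e) \<noteq> {}"
  shows "q = 3 \<and> (m = d!1 \<or> m = d!2) \<and> d!1 \<notin> e \<and> d!2 \<notin> e \<and> \<not>(c!1 \<in> e \<and> c!(p-1) \<in> e)"
proof -
  have hit: "\<And>f. f \<in> E \<Longrightarrow> u \<notin> f \<Longrightarrow> m \<notin> f \<Longrightarrow> f \<inter> e \<noteq> {}"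
  proof -
    fix f assume "f \<in> E" "u \<notin> f" "m \<notin> f"
    moreover have "f \<inter> insert u (insert m e) \<noteq> {}" using \<open>f \<in> E\<close> by (rule bspec[OF cov])
    ultimately show "f \<inter> e \<noteq> {}" by blast
  qed
  have chord: "\<And>x y. x \<in> e \<Longrightarrow> y \<in> e \<Longrightarrow> x \<in> set c \<Longrightarrow> x \<noteq> u \<Longrightarrow> y \<in> set d \<Longrightarrow> y \<noteq> u \<Longrightarrow> False"
  proof -
    fix x y assume x: "x \<in> e" "x \<in> set c" "x \<noteq> u" and y: "y \<in> e" "y \<in> set d" "y \<noteq> u"
    have "x \<noteq> y" using x y cap by blast
    then have "e = {x,y}" using x(1) y(1) ab by auto
    then show False using N1[OF x(2,3) y(2,3)] eE by simp
  qed
  have two: "\<And>x1 x2 y1 y2. {x1,x2} \<in> E \<Longrightarrow> {y1,y2} \<in> E \<Longrightarrow> {x1,x2} \<subseteq> set c - {u,m} \<Longrightarrow>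
       {y1,y2} \<subseteq> set d - {u,m} \<Longrightarrow> False"
  proof -
    fix x1 x2 y1 y2 assume f1: "{x1,x2} \<in> E" and f2: "{y1,y2} \<in> E"
      and s1: "{x1,x2} \<subseteq> set c - {u,m}" and s2: "{y1,y2} \<subseteq> set d - {u,m}"
    have "{x1,x2} \<inter> e \<noteq> {}" using hit[OF f1] s1 by blast
    then obtain x where x: "x \<in> e" "x \<in> {x1,x2}" by blast
    have "{y1,y2} \<inter> e \<noteq> {}" using hit[OF f2] s2 by blast
    then obtain y where y: "y \<in> e" "y \<in> {y1,y2}" by blast
    show False using chord[OF x(1) y(1)] x(2) y(2) s1 s2 by blast
  qed
  have mu: "m \<noteq> u" using sg_edge[OF sg um] by blast
  have cs: "c!1 \<in> set c" "c!2 \<in> set c" "c!3 \<in> set c" "c!(p-1) \<in> set c" using p4 by auto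
  have cnu: "c!1 \<noteq> u" "c!2 \<noteq> u" "c!3 \<noteq> u" "c!(p-1) \<noteq> u"
    using c_nu[of 1] c_nu[of 2] c_nu[of 3] c_nu[of "p-1"] p4 by auto
  have cnd: "c!1 \<notin> set d" "c!2 \<notin> set d" "c!3 \<notin> set d" "c!(p-1) \<notin> set d"
    using c_nd[of 1] c_nd[of 2] c_nd[of 3] c_nd[of "p-1"] p4 by auto
  have cne: "c!1 \<noteq> c!2" "c!1 \<noteq> c!3" "c!2 \<noteq> c!(p-1)" "c!1 \<noteq> c!(p-1)"
    using cdist[of 1 2] cdist[of 1 3] cdist[of 2 "p-1"] cdist[of 1 "p-1"] p4 by auto
  have ds: "d!1 \<in> set d" "d!2 \<in> set d" "d!(q-1) \<in> set d" using q3 by auto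
  have dnu: "d!1 \<noteq> u" "d!2 \<noteq> u" "d!(q-1) \<noteq> u"
    using d_nu[of 1] d_nu[of 2] d_nu[of "q-1"] q3 by auto
  have dnc: "d!1 \<notin> set c" "d!2 \<notin> set c" "d!(q-1) \<notin> set c"
    using d_nc[of 1] d_nc[of 2] d_nc[of "q-1"] q3 by auto
  have d12: "d!1 \<noteq> d!2" using ddist[of 1 2] q3 by auto
  have sc12: "m \<notin> set c \<Longrightarrow> {c!1, c!2} \<subseteq> set c - {u,m}" using cs cnu by auto
  have sd12: "m \<notin> set d \<Longrightarrow> {d!1, d!2} \<subseteq> set d - {u,m}" using ds dnu by auto
  have mK: "m \<in> set d" "m = d!1 \<or> m = d!(q-1)"
  proof -
    have "m \<in> set d"
    proof (rule ccontr)
      assume nd: "m \<notin> set d"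
      show False
      proof (cases "m \<in> set c")
        case True
        then have "m = c!1 \<or> m = c!(p-1)" using N4[OF um] by blast
        then show False
        proof
          assume m1: "m = c!1"
          have "{c!2, c!3} \<subseteq> set c - {u,m}" using m1 cs cnu cne by auto
          then show False using two[OF E_c23 E_d12 _ sd12[OF nd]] by blast
        next
          assume ml: "m = c!(p-1)"
          have "{c!1, c!2} \<subseteq> set c - {u,m}" using ml cs cnu cne by auto
          then show False using two[OF E_c12 E_d12 _ sd12[OF nd]] by blast
        qed
      next
        case False
        show False using two[OF E_c12 E_d12 sc12[OF False] sd12[OF nd]] by blast
      qed
    qed
    then show "m \<in> set d" "m = d!1 \<or> m = d!(q-1)" using N3[OF um] by auto
  qed
  have mnc: "m \<notin> set c" using mK(1) mu cap by blast
  have qq: "q = 3"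
  proof (rule ccontr)
    assume "q \<noteq> 3"
    then have q4: "q \<ge> 4" using q3 by linarith
    have d3: "d!3 \<in> set d" "d!3 \<noteq> u" using d_nu[of 3] q4 by auto
    have dd: "d!1 \<noteq> d!3" "d!2 \<noteq> d!(q-1)" "d!1 \<noteq> d!(q-1)" "d!2 \<noteq> d!3"
      using ddist[of 1 3] ddist[of 2 "q-1"] ddist[of 1 "q-1"] ddist[of 2 3] q4 by auto
    from mK(2) show False
    proof
      assume m1: "m = d!1"
      have "{d!2, d!3} \<subseteq> set d - {u,m}" using m1 ds dnu d3 dd d12 by auto
      then show False using two[OF E_c12 E_d23[OF q4] sc12[OF mnc]] by blast
    next
      assume ml: "m = d!(q-1)"
      have "{d!1, d!2} \<subseteq> set d - {u,m}" using ml ds dnu dd by auto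
      then show False using two[OF E_c12 E_d12 sc12[OF mnc]] by blast
    qed
  qed
  have md: "m = d!1 \<or> m = d!2" using mK(2) qq by (simp add: numeral_2_eq_2 numeral_3_eq_3)
  have nde: "\<And>z. z \<in> set d \<Longrightarrow> z \<noteq> u \<Longrightarrow> z \<notin> e"
  proof
    fix z assume z: "z \<in> set d" "z \<noteq> u" "z \<in> e"
    have "{c!1, c!2} \<inter> e \<noteq> {}" using hit[OF E_c12] cnu cnd mK(1) by auto
    then obtain x where "x \<in> e" "x \<in> {c!1, c!2}" by blast
    then show False using chord[of x z] z cs cnu by auto
  qed
  have ncl: "\<not>(c!1 \<in> e \<and> c!(p-1) \<in> e)"
  proof
    assume h: "c!1 \<in> e \<and> c!(p-1) \<in> e"
    then have "e = {c!1, c!(p-1)}" using ab cne(4) by auto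
    then show False using N2 eE by simp
  qed
  show ?thesis using qq md nde[OF ds(1) dnu(1)] nde[OF ds(2) dnu(2)] ncl by blast
qed

definition gmap :: "nat \<Rightarrow> 'a set set \<Rightarrow> 'a set set" where
  "gmap i M' = insert {u, d!i} {f\<in>M'. u \<notin> f \<and> f \<noteq> {d!1, d!2}}"

lemma mm2_sub:
  "{M. maximal_matching E M \<and> card M = 2} \<subseteq>
     gmap 1 ` {M. maximal_matching E M \<and> card M = 3} \<union> gmap 2 ` {M. maximal_matching E M \<and> card M = 3}"
proof
  fix M assume "M \<in> {M. maximal_matching E M \<and> card M = 2}"
  then have M: "maximal_matching E M" "card M = 2" by auto
  obtain m e where me: "M = {{u,m}, e}" "{u,m} \<in> E" "e \<in> E" "u \<notin> e" "m \<notin> e"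
     "\<exists>a b. e = {a,b} \<and> a \<noteq> b" "\<forall>f\<in>E. f \<inter> insert u (insert m e) \<noteq> {}"
    using split2[OF M] by (elim exE conjE) (rule that; (assumption | blast))
  obtain a b where ab: "e = {a,b}" "a \<noteq> b" using me(6) by blast
  have cr: "q = 3" "m = d!1 \<or> m = d!2" "d!1 \<notin> e" "d!2 \<notin> e" "\<not>(c!1 \<in> e \<and> c!(p-1) \<in> e)"
    using core2[OF me(2,3,4,5) ab me(7)] by auto
  define y where "y = (if c!1 \<in> e then c!(p-1) else c!1)"
  have ye: "y \<notin> e" using cr(5) unfolding y_def by auto
  have yE: "{u,y} \<in> E" using E_uc1 E_ucl unfolding y_def by auto
  have ys: "y \<in> set c" "y \<noteq> u" using p4 c_nu[of 1] c_nu[of "p-1"] unfolding y_def by auto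
  have ynd: "y \<notin> set d" using ys cap by blast
  have dsd: "d!1 \<in> set d" "d!2 \<in> set d" using q3 by auto
  have yd: "y \<noteq> d!1" "y \<noteq> d!2" using ynd dsd by metis+
  have ud: "u \<noteq> d!1" "u \<noteq> d!2" using d_nu[of 1] d_nu[of 2] q3 by auto
  define M' where "M' = {e, {u,y}, {d!1, d!2}}"
  have mt: "matching E M'"
    unfolding matching_def M'_def using me(3) yE E_d12 ye me(4) cr(3,4) ud yd by auto
  have cv: "\<forall>f\<in>E. f \<inter> \<Union>M' \<noteq> {}"
  proof
    fix f assume "f \<in> E"
    then have "f \<inter> insert u (insert m e) \<noteq> {}" by (rule bspec[OF me(7)])
    moreover have "insert u (insert m e) \<subseteq> \<Union>M'" using cr(2) unfolding M'_def by auto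
    ultimately show "f \<inter> \<Union>M' \<noteq> {}" by blast
  qed
  have mmM': "maximal_matching E M'" using cover_maximal[OF mt cv] .
  have n1: "e \<noteq> {u,y}" using me(4) by auto
  have n2: "e \<noteq> {d!1, d!2}" using cr(3) by auto
  have n3: "{u,y} \<noteq> {d!1, d!2}" using ud by auto
  have c3: "card M' = 3" unfolding M'_def using n1 n2 n3 by simp
  have filt: "{f\<in>M'. u \<notin> f \<and> f \<noteq> {d!1, d!2}} = {e}" unfolding M'_def using me(4) n2 by auto
  have B: "M' \<in> {M. maximal_matching E M \<and> card M = 3}" using mmM' c3 by simp
  from cr(2) show "M \<in> gmap 1 ` {M. maximal_matching E M \<and> card M = 3} \<union> gmap 2 ` {M. maximal_matching E M \<and> card M = 3}"
  proof
    assume "m = d!1"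
    then have "gmap 1 M' = M" unfolding gmap_def filt using me(1) by simp
    then show ?thesis using B by blast
  next
    assume "m = d!2"
    then have "gmap 2 M' = M" unfolding gmap_def filt using me(1) by simp
    then show ?thesis using B by blast
  qed
qed

lemma mm2_le:
  "card {M. maximal_matching E M \<and> card M = 2} \<le> 2 * card {M. maximal_matching E M \<and> card M = 3}"
proof -
  let ?B = "{M. maximal_matching E M \<and> card M = 3}"
  have finMM: "finite {M. maximal_matching E M}" using finite_MM[OF finE] .
  have fB: "finite ?B" using finMM by (rule rev_finite_subset) auto
  have "card {M. maximal_matching E M \<and> card M = 2} \<le> card (gmap 1 ` ?B \<union> gmap 2 ` ?B)"
    using mm2_sub fB by (intro card_mono) auto
  also have "\<dots> \<le> card (gmap 1 ` ?B) + card (gmap 2 ` ?B)" by (rule card_Un_le)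
  also have "\<dots> \<le> card ?B + card ?B" by (rule add_mono[OF card_image_le[OF fB] card_image_le[OF fB]])
  finally show ?thesis by simp
qed

end

lemma sum_if_const:
  assumes "finite A"
  shows "(\<Sum>x\<in>A. (if P x then (a::nat) else b)) = a * card {x\<in>A. P x} + b * card {x\<in>A. \<not> P x}"
proof -
  have "(\<Sum>x\<in>A. (if P x then a else b)) = (\<Sum>x\<in>A \<inter> {x. P x}. a) + (\<Sum>x\<in>A \<inter> - {x. P x}. b)"
    by (rule sum.If_cases[OF assms])
  moreover have "A \<inter> {x. P x} = {x\<in>A. P x}" "A \<inter> - {x. P x} = {x\<in>A. \<not> P x}" by auto
  ultimately show ?thesis by simp
qed

lemma card_split:
  assumes "finite A"
  shows "card A = card {x\<in>A. P x} + card {x\<in>A. \<not> P x}"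
proof -
  have "A = {x\<in>A. P x} \<union> {x\<in>A. \<not> P x}" by auto
  moreover have "{x\<in>A. P x} \<inter> {x\<in>A. \<not> P x} = {}" by auto
  ultimately show ?thesis using assms by (metis (no_types, lifting) card_Un_disjoint finite_Un)
qed

lemma frac_lem: "(y::real) > 0 \<Longrightarrow> 7 * y \<le> 3 * x \<Longrightarrow> 7/3 \<le> x / y"
  by (simp add: field_simps)

context bic begin

lemma sum_ge:
  "7 * card {M. maximal_matching E M} \<le> 3 * (\<Sum>M\<in>{M. maximal_matching E M}. card M)"
proof -
  let ?MM = "{M. maximal_matching E M}"
  have fin: "finite ?MM" using finite_MM[OF finE] .
  have "(\<Sum>M\<in>?MM. (if card M = 2 then 6 else 9)) \<le> (\<Sum>M\<in>?MM. 3 * card M)"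
  proof (rule sum_mono)
    fix M assume "M \<in> ?MM"
    then have "card M \<ge> 2" using mm_ge2 by blast
    then show "(if card M = 2 then 6 else 9) \<le> 3 * card M" by auto
  qed
  moreover have "(\<Sum>M\<in>?MM. (if card M = 2 then 6 else (9::nat))) =
      6 * card {M\<in>?MM. card M = 2} + 9 * card {M\<in>?MM. card M \<noteq> 2}"
    by (rule sum_if_const[OF fin])
  moreover have "card ?MM = card {M\<in>?MM. card M = 2} + card {M\<in>?MM. card M \<noteq> 2}"
    by (rule card_split[OF fin])
  moreover have "card {M\<in>?MM. card M = 2} \<le> 2 * card {M\<in>?MM. card M \<noteq> 2}"
  proof -
    have "card {M\<in>?MM. card M = 2} = card {M. maximal_matching E M \<and> card M = 2}" by simp
    also have "\<dots> \<le> 2 * card {M. maximal_matching E M \<and> card M = 3}" by (rule mm2_le)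
    also have "\<dots> \<le> 2 * card {M\<in>?MM. card M \<noteq> 2}"
    proof -
      have "{M. maximal_matching E M \<and> card M = 3} \<subseteq> {M\<in>?MM. card M \<noteq> 2}" by auto
      moreover have "finite {M\<in>?MM. card M \<noteq> 2}" using fin by auto
      ultimately show ?thesis by (simp add: card_mono)
    qed
    finally show ?thesis .
  qed
  ultimately show ?thesis by (simp add: sum_distrib_left)
qed

lemma MM_pos: "card {M. maximal_matching E M} > 0"
proof -
  have fin: "finite {M. maximal_matching E M}" using finite_MM[OF finE] .
  obtain M where "maximal_matching E M" using exists_MM[OF finE] by blast
  then have "{M. maximal_matching E M} \<noteq> {}" by blast
  then show ?thesis using fin by (simp add: card_gt_0_iff)
qed

lemma avm_ge: "avm E \<ge> 7/3"
proof -
  let ?N = "card {M. maximal_matching E M}" and ?S = "\<Sum>M\<in>{M. maximal_matching E M}. card M"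
  have "real (7 * ?N) \<le> real (3 * ?S)" using sum_ge by linarith
  then have h: "7 * real ?N \<le> 3 * real ?S" by simp
  have pos: "real ?N > 0" using MM_pos by simp
  have "avm E = real ?S / real ?N" unfolding avm_def by (simp add: of_nat_sum)
  moreover have "7/3 \<le> real ?S / real ?N" using frac_lem[OF pos h] .
  ultimately show ?thesis by simp
qed

end

lemma match_at_vertex:
  assumes "matching E M" "finite M"
  shows "card {f\<in>M. v \<in> f} \<le> 1"
proof -
  have "\<forall>a1\<in>{f\<in>M. v \<in> f}. \<forall>a2\<in>{f\<in>M. v \<in> f}. a1 = a2"
    using assms(1) unfolding matching_def by blast
  then show ?thesis using assms(2) by (simp add: card_le_Suc0_iff_eq)
qed

lemma R_cases: "f \<in> R33_E n \<Longrightarrow> f = {0,1} \<or> f = {0,2} \<or> f = {1,2} \<or> f = {0,3} \<or> f = {0,4} \<or> f = {3,4}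
   \<or> (\<exists>k. f = {1,k} \<and> 5 \<le> k \<and> k < n)"
  unfolding R33_E_def by simp

lemma R_fin: "finite (R33_E n)"
proof -
  have "R33_E n \<subseteq> Pow {0..<max n 5}"
    unfolding R33_E_def by auto
  then show ?thesis by (rule finite_subset) simp
qed

lemma R_M3:
  assumes m: "matching (R33_E n) M" and c: "card M \<ge> 3"
  shows "card M = 3 \<and> (\<exists>k. 5 \<le> k \<and> k < n \<and> M = {{1,k},{0,2},{3,4}})"
proof -
  have ME: "M \<subseteq> R33_E n" using m unfolding matching_def by blast
  have finM: "finite M" using finite_subset[OF ME R_fin] .
  let ?A0 = "{f\<in>M. (0::nat) \<in> f}" and ?A1 = "{f\<in>M. (0::nat) \<notin> f \<and> 1 \<in> f}" and ?A2 = "{f\<in>M. f = {3,4}}"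
  have cov: "M = ?A0 \<union> ?A1 \<union> ?A2"
  proof
    show "M \<subseteq> ?A0 \<union> ?A1 \<union> ?A2"
    proof
      fix f assume f: "f \<in> M"
      then have "f \<in> R33_E n" using ME by blast
      from R_cases[OF this] show "f \<in> ?A0 \<union> ?A1 \<union> ?A2" using f by auto
    qed
  qed auto
  have c0: "card ?A0 \<le> 1" using match_at_vertex[OF m finM] .
  have c1: "card ?A1 \<le> 1"
  proof -
    have "card ?A1 \<le> card {f\<in>M. (1::nat) \<in> f}" using finM by (intro card_mono) auto
    then show ?thesis using match_at_vertex[OF m finM, of 1] by linarith
  qed
  have c2: "card ?A2 \<le> 1"
  proof -
    have "?A2 \<subseteq> {{3,4}}" by auto
    then have "card ?A2 \<le> card {{3::nat,4}}" by (intro card_mono) auto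
    then show ?thesis by simp
  qed
  have "card M = card (?A0 \<union> ?A1 \<union> ?A2)" using arg_cong[OF cov, of card] .
  also have "\<dots> \<le> card (?A0 \<union> ?A1) + card ?A2" by (rule card_Un_le)
  finally have "card M \<le> card (?A0 \<union> ?A1) + card ?A2" .
  moreover have "card (?A0 \<union> ?A1) \<le> card ?A0 + card ?A1" by (rule card_Un_le)
  ultimately have "card M \<le> card ?A0 + card ?A1 + card ?A2" by linarith
  then have e: "card ?A0 = 1" "card ?A1 = 1" "card ?A2 = 1" "card M = 3" using c c0 c1 c2 by linarith+
  obtain f0 where f0: "?A0 = {f0}" using e(1) card_1_singletonE by blast
  obtain f1 where f1: "?A1 = {f1}" using e(2) card_1_singletonE by blast
  obtain f2 where f2: "?A2 = {f2}" using e(3) card_1_singletonE by blast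
  have f2e: "f2 = {3,4}" using f2 by blast
  have Mf: "M = {f0, f1, {3,4}}" using cov f0 f1 f2 f2e by auto
  have f0M: "f0 \<in> M" "0 \<in> f0" using f0 by auto
  have f1M: "f1 \<in> M" "0 \<notin> f1" "1 \<in> f1" using f1 by auto
  have f2M: "{3,4} \<in> M" using f2 f2e by auto
  have dj: "\<And>g h. g \<in> M \<Longrightarrow> h \<in> M \<Longrightarrow> g \<noteq> h \<Longrightarrow> g \<inter> h = {}" using m unfolding matching_def by blast
  have f01: "f0 \<noteq> f1" using f0M f1M by auto
  have f1n34: "f1 \<noteq> {3,4}" using f1M by auto
  have f0n34: "f0 \<noteq> {3,4}" using f0M by auto
  have d01: "f0 \<inter> f1 = {}" using dj[OF f0M(1) f1M(1) f01] .
  have d02: "f0 \<inter> {3,4} = {}" using dj[OF f0M(1) f2M f0n34] .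
  have d12: "f1 \<inter> {3,4} = {}" using dj[OF f1M(1) f2M f1n34] .
  have f0R: "f0 \<in> R33_E n" and f1R: "f1 \<in> R33_E n" using ME f0M f1M by auto
  have f0v: "f0 = {0,2}"
    using R_cases[OF f0R] f0M(2) d01 f1M(3) d02 by auto
  obtain k where k: "f1 = {1,k}" "5 \<le> k" "k < n"
    using R_cases[OF f1R] f1M(2,3) d01 f0v d12 by auto
  show ?thesis using Mf f0v k e(4) by blast
qed

lemma R_mm_intro:
  assumes "matching (R33_E n) M" "\<forall>f\<in>R33_E n. f \<inter> \<Union>M \<noteq> {}"
  shows "maximal_matching (R33_E n) M"
  using cover_maximal[OF assms] .

lemma card2_ne3: "card {a,b} \<noteq> 3"
  by (cases "a = b") auto

lemma matching2: "a \<in> E \<Longrightarrow> b \<in> E \<Longrightarrow> a \<inter> b = {} \<Longrightarrow> matching E {a,b}"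
  unfolding matching_def by auto

lemma R_cover:
  assumes "0 \<in> S" "1 \<in> S" "3 \<in> S \<or> 4 \<in> S"
  shows "\<forall>f\<in>R33_E n. f \<inter> S \<noteq> {}"
proof
  fix f assume "f \<in> R33_E n"
  from R_cases[OF this] have "0 \<in> f \<or> 1 \<in> f \<or> f = {3,4}" by (elim disjE exE conjE) simp_all
  then show "f \<inter> S \<noteq> {}" using assms by (elim disjE) auto
qed

lemma R_edge: "{0,1} \<in> R33_E n" "{0,3} \<in> R33_E n" "{0,4} \<in> R33_E n" "{3,4} \<in> R33_E n"
  unfolding R33_E_def by auto

lemma R_leaf: "5 \<le> k \<Longrightarrow> k < n \<Longrightarrow> {1,k} \<in> R33_E n"
  unfolding R33_E_def by blast

lemma R_f3: "5 \<le> k \<Longrightarrow> k < n \<Longrightarrow> maximal_matching (R33_E n) {{1,k},{0,3}}"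
proof -
  assume k: "5 \<le> k" "k < n"
  have "matching (R33_E n) {{1,k},{0,3}}" using matching2[OF R_leaf[OF k] R_edge(2)] k by simp
  moreover have "\<forall>f\<in>R33_E n. f \<inter> \<Union>{{1,k},{0,3}} \<noteq> {}" by (rule R_cover) auto
  ultimately show ?thesis by (rule R_mm_intro)
qed

lemma R_f4: "5 \<le> k \<Longrightarrow> k < n \<Longrightarrow> maximal_matching (R33_E n) {{1,k},{0,4}}"
proof -
  assume k: "5 \<le> k" "k < n"
  have "matching (R33_E n) {{1,k},{0,4}}" using matching2[OF R_leaf[OF k] R_edge(3)] k by simp
  moreover have "\<forall>f\<in>R33_E n. f \<inter> \<Union>{{1,k},{0,4}} \<noteq> {}" by (rule R_cover) auto
  ultimately show ?thesis by (rule R_mm_intro)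
qed

lemma R_X: "maximal_matching (R33_E n) {{0,1},{3,4}}"
proof -
  have "matching (R33_E n) {{0,1},{3,4}}" using matching2[OF R_edge(1) R_edge(4)] by simp
  moreover have "\<forall>f\<in>R33_E n. f \<inter> \<Union>{{0,1},{3,4}} \<noteq> {}" by (rule R_cover) auto
  ultimately show ?thesis by (rule R_mm_intro)
qed

lemma pair_inj: "{{1,k},B} = {{1,k'},B} \<Longrightarrow> (1::nat) \<notin> B \<Longrightarrow> 5 \<le> k \<Longrightarrow> k = k'"
proof -
  assume eq: "{{1,k},B} = {{1,k'},B}" and B: "(1::nat) \<notin> B" and k: "5 \<le> k"
  have "{1,k} \<in> {{1,k'},B}" unfolding eq[symmetric] by simp
  moreover have "{1,k} \<noteq> B" using B by auto
  ultimately have "{1,k} = {1,k'}" by simp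
  then have "k \<in> {1,k'}" by (metis insertI1 insert_commute)
  then show "k = k'" using k by auto
qed

lemma pair_dis: "{{1,k},B} = {{1,k'},C} \<Longrightarrow> (1::nat) \<notin> B \<Longrightarrow> B \<noteq> C \<Longrightarrow> False"
proof -
  assume eq: "{{1,k},B} = {{1,k'},C}" and B: "(1::nat) \<notin> B" and BC: "B \<noteq> C"
  have "B \<in> {{1,k'},C}" unfolding eq[symmetric] by simp
  moreover have "B \<noteq> {1,k'}" using B by auto
  ultimately show False using BC by simp
qed

lemma R_avm_lt: "avm (R33_E n) < 7/3"
proof -
  let ?E = "R33_E n"
  let ?MM = "{M. maximal_matching ?E M}"
  let ?A3 = "(\<lambda>k. {{1,k},{0,3::nat}}) ` {5..<n}"
  let ?A4 = "(\<lambda>k. {{1,k},{0,4::nat}}) ` {5..<n}"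
  let ?X = "{{0,1},{3,4::nat}}"
  have fin: "finite ?MM" using finite_MM[OF R_fin] .
  have inj3: "inj_on (\<lambda>k. {{1,k},{0,3::nat}}) {5..<n}"
  proof (rule inj_onI)
    fix k k' assume k: "k \<in> {5..<n}" and k': "k' \<in> {5..<n}" and eq: "{{1,k},{0,3::nat}} = {{1,k'},{0,3}}"
    show "k = k'" using pair_inj[OF eq] k by simp
  qed
  have inj4: "inj_on (\<lambda>k. {{1,k},{0,4::nat}}) {5..<n}"
  proof (rule inj_onI)
    fix k k' assume k: "k \<in> {5..<n}" and k': "k' \<in> {5..<n}" and eq: "{{1,k},{0,4::nat}} = {{1,k'},{0,4}}"
    show "k = k'" using pair_inj[OF eq] k by simp
  qed
  have d34: "?A3 \<inter> ?A4 = {}"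
  proof (rule ccontr)
    assume "?A3 \<inter> ?A4 \<noteq> {}"
    then obtain k k' where k: "k \<in> {5..<n}" "k' \<in> {5..<n}" and eq: "{{1,k},{0,3::nat}} = {{1,k'},{0,4}}"
      by blast
    have "{0,3::nat} \<noteq> {0,4}" by (simp add: doubleton_eq_iff)
    then show False using pair_dis[OF eq] by simp
  qed
  have dX: "?X \<notin> ?A3 \<union> ?A4"
  proof
    assume "?X \<in> ?A3 \<union> ?A4"
    then obtain k where k: "k \<in> {5..<n}" and eq: "?X = {{1,k},{0,3}} \<or> ?X = {{1,k},{0,4}}" by blast
    have "{0,1} \<in> {{1,k},{0,3::nat}} \<or> {0,1} \<in> {{1,k},{0,4::nat}}"
    proof (rule disjE[OF eq])
      assume e1: "?X = {{1,k},{0,3}}"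
      show ?thesis unfolding e1[symmetric] by simp
    next
      assume e1: "?X = {{1,k},{0,4}}"
      show ?thesis unfolding e1[symmetric] by simp
    qed
    moreover have "{0,1} \<noteq> {1,k}" using k by (auto simp: doubleton_eq_iff)
    moreover have "{0,1::nat} \<noteq> {0,3}" "{0,1::nat} \<noteq> {0,4}" by (auto simp: doubleton_eq_iff)
    ultimately show False by simp
  qed
  have cF: "card (insert ?X (?A3 \<union> ?A4)) = 2 * (n - 5) + 1"
  proof -
    have "card (?A3 \<union> ?A4) = card ?A3 + card ?A4" using d34 by (intro card_Un_disjoint) auto
    moreover have "card ?A3 = n - 5" using card_image[OF inj3] by simp
    moreover have "card ?A4 = n - 5" using card_image[OF inj4] by simp
    moreover have "finite (?A3 \<union> ?A4)" by auto
    ultimately show ?thesis using dX by simp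
  qed
  have Fsub: "insert ?X (?A3 \<union> ?A4) \<subseteq> {M\<in>?MM. card M \<noteq> 3}"
  proof -
    have "card ?X = 2" by (simp add: doubleton_eq_iff)
    then have "?X \<in> {M\<in>?MM. card M \<noteq> 3}" using R_X by simp
    moreover have "?A3 \<subseteq> {M\<in>?MM. card M \<noteq> 3}"
    proof
      fix M assume "M \<in> ?A3"
      then obtain k where k: "5 \<le> k" "k < n" "M = {{1,k},{0,3}}" by auto
      show "M \<in> {M\<in>?MM. card M \<noteq> 3}" using R_f3[OF k(1,2)] card2_ne3[of "{1,k}" "{0,3}"] k(3) by simp
    qed
    moreover have "?A4 \<subseteq> {M\<in>?MM. card M \<noteq> 3}"
    proof
      fix M assume "M \<in> ?A4"
      then obtain k where k: "5 \<le> k" "k < n" "M = {{1,k},{0,4}}" by auto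
      show "M \<in> {M\<in>?MM. card M \<noteq> 3}" using R_f4[OF k(1,2)] card2_ne3[of "{1,k}" "{0,4}"] k(3) by simp
    qed
    ultimately show ?thesis by blast
  qed
  have cc: "2 * (n - 5) + 1 \<le> card {M\<in>?MM. card M \<noteq> 3}"
    using card_mono[OF _ Fsub] fin cF by auto
  have cb: "card {M\<in>?MM. card M = 3} \<le> n - 5"
  proof -
    have "{M\<in>?MM. card M = 3} \<subseteq> (\<lambda>k. {{1,k},{0,2},{3,4::nat}}) ` {5..<n}"
    proof
      fix M assume "M \<in> {M\<in>?MM. card M = 3}"
      then have M: "maximal_matching ?E M" "card M = 3" by auto
      then have "matching ?E M" unfolding maximal_matching_def by blast
      then have "\<exists>k. 5 \<le> k \<and> k < n \<and> M = {{1,k},{0,2},{3,4}}" using R_M3[of n M] M(2) by simp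
      then obtain k where k: "5 \<le> k" "k < n" "M = {{1,k},{0,2},{3,4}}" by blast
      have "k \<in> {5..<n}" using k by simp
      then show "M \<in> (\<lambda>k. {{1,k},{0,2},{3,4::nat}}) ` {5..<n}" using k(3) by (rule rev_image_eqI)
    qed
    then have "card {M\<in>?MM. card M = 3} \<le> card ((\<lambda>k. {{1,k},{0,2},{3,4::nat}}) ` {5..<n})"
      by (intro card_mono) auto
    also have "\<dots> \<le> card {5..<n}" by (rule card_image_le) simp
    finally show ?thesis by simp
  qed
  have le3: "\<And>M. M \<in> ?MM \<Longrightarrow> card M \<le> 3"
  proof -
    fix M assume "M \<in> ?MM"
    then have "matching ?E M" unfolding maximal_matching_def by blast
    then show "card M \<le> 3" using R_M3[of n M] by (cases "card M \<ge> 3") auto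
  qed
  have "(\<Sum>M\<in>?MM. 3 * card M) \<le> (\<Sum>M\<in>?MM. (if card M = 3 then 9 else 6))"
  proof (rule sum_mono)
    fix M assume "M \<in> ?MM"
    then have "card M \<le> 3" using le3 by blast
    then show "3 * card M \<le> (if card M = 3 then 9 else 6)" by auto
  qed
  also have "\<dots> = 9 * card {M\<in>?MM. card M = 3} + 6 * card {M\<in>?MM. card M \<noteq> 3}"
    by (rule sum_if_const[OF fin])
  finally have s1: "3 * (\<Sum>M\<in>?MM. card M) \<le> 9 * card {M\<in>?MM. card M = 3} + 6 * card {M\<in>?MM. card M \<noteq> 3}"
    by (simp add: sum_distrib_left)
  have cN: "card ?MM = card {M\<in>?MM. card M = 3} + card {M\<in>?MM. card M \<noteq> 3}"
    by (rule card_split[OF fin])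
  have key: "3 * (\<Sum>M\<in>?MM. card M) < 7 * card ?MM" using s1 cN cc cb by linarith
  have pos: "card ?MM > 0" using cN cc by linarith
  let ?N = "card ?MM" and ?S = "\<Sum>M\<in>?MM. card M"
  have h: "3 * real ?S < 7 * real ?N" using key by (metis of_nat_less_iff of_nat_mult of_nat_numeral)
  have posr: "real ?N > 0" using pos by simp
  have "avm ?E = real ?S / real ?N" unfolding avm_def by (simp add: of_nat_sum)
  moreover have "real ?S / real ?N < 7/3" using h posr by (simp add: field_simps)
  ultimately show ?thesis by simp
qed

lemma main_aux:
  assumes sg: "simple_graph V E" and cg: "connected_graph V E" and ce: "card E = card V + 1"
    and c: "is_cycle E c" and d: "is_cycle E d" and l: "length c \<ge> 4" and cap: "set c \<inter> set d = {u}"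
  shows "avm E \<ge> 7/3"
proof -
  have uc: "u \<in> set c" and ud: "u \<in> set d" using cap by auto
  obtain c' where c': "is_cycle E c'" "c'!0 = u" "set c' = set c" "length c' = length c"
    using rotate_cycle[OF c uc] by blast
  obtain d' where d': "is_cycle E d'" "d'!0 = u" "set d' = set d" "length d' = length d"
    using rotate_cycle[OF d ud] by blast
  have cap': "set c' \<inter> set d' = {u}" using cap c'(3) d'(3) by simp
  have i1: "card (set c' \<inter> set d') = 1" using cap' by simp
  interpret bic V E c' d' u
  proof
    show "simple_graph V E" by fact
    show "is_cycle E c'" by fact
    show "is_cycle E d'" by fact
    show "4 \<le> length c'" using l c'(4) by simp
    show "c'!0 = u" by fact
    show "d'!0 = u" by fact
    show "set c' \<inter> set d' = {u}" by fact
    fix x y assume "x \<in> set c' \<union> set d'" "y \<in> set c' \<union> set d'" "{x,y} \<in> E"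
    then show "{x,y} \<in> cedges c' \<union> cedges d'" using nochord[OF sg cg ce c'(1) d'(1) i1] by blast
  qed
  show ?thesis using avm_ge .
qed

theorem lemma3p3:
  fixes V :: "'a set" and E :: "'a set set" and p q n :: nat
  assumes "in_B V E p q"
    and "n = card V"
    and "max p q \<ge> 4"
  shows "avm E > avm (R33_E n)"
proof -
  obtain c1 c2 where h: "simple_graph V E" "connected_graph V E" "card E = card V + 1"
    "is_cycle E c1" "is_cycle E c2" "length c1 = p" "length c2 = q" "card (set c1 \<inter> set c2) = 1"
    using assms(1) unfolding in_B_def by blast
  obtain u where u: "set c1 \<inter> set c2 = {u}" using h(8) card_1_singletonE by blast
  have "avm E \<ge> 7/3"
  proof (cases "p \<ge> 4")
    case True
    then show ?thesis using main_aux[OF h(1,2,3,4,5) _ u] h(6) by simp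
  next
    case False
    then have "q \<ge> 4" using assms(3) by simp
    moreover have "set c2 \<inter> set c1 = {u}" using u by blast
    ultimately show ?thesis using main_aux[OF h(1,2,3,5,4)] h(7) by simp
  qed
  moreover have "avm (R33_E n) < 7/3" by (rule R_avm_lt)
  ultimately show ?thesis by linarith
qed


end
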